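(* Let $(X,\rho)$ be a metric space, $(A_k)\subset CL(X)$, $A\in CL(X)$ and let $f\colon[0,\infty)\to[0,\infty)$ be a modulus. If $(A_k)$ is Wijsman strongly Cesàro summable to $A$, then $(A_k)$ is Wijsman strongly Cesàro summable to $A$ with respect to $f$.
   Context: A modulus is a function $f\colon[0,\infty)\to[0,\infty)$ such that $f(x)=0$ iff $x=0$, $f$ is subadditive, increasing and continuous. $CL(X)$ denotes the set of all non-empty closed subsets of $(X,\rho)$, and $d(x,B)=\inf_{y\in B}\rho(x,y)$. $(A_k)$ is Wijsman strongly Cesàro summable to $A$ if $\lim_{n\to\infty}\frac1n\sum_{k=1}^n|d(x,A_k)-d(x,A)|=0$ for every $x\in X$; it is Wijsman strongly Cesàro summable to $A$ with respect to $f$ if $\lim_{n\to\infty}\frac1n\sum_{k=1}^n f(|d(x,A_k)-d(x,A)|)=0$ for every $x\in X$. *)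

theory Defs
  imports "HOL-Analysis.Analysis"
begin

definition modulus :: "(real \<Rightarrow> real) \<Rightarrow> bool" where
  "modulus f \<longleftrightarrow>
     (\<forall>x\<ge>0. f x \<ge> 0) \<and>
     (\<forall>x\<ge>0. f x = 0 \<longleftrightarrow> x = 0) \<and>
     (\<forall>x\<ge>0. \<forall>y\<ge>0. f (x + y) \<le> f x + f y) \<and>
     (\<forall>x\<ge>0. \<forall>y\<ge>0. x \<le> y \<longrightarrow> f x \<le> f y) \<and>
     continuous_on {0..} f"

definition CL :: "'a::metric_space set set" where
  "CL = {B. B \<noteq> {} \<and> closed B}"

definition wijsman_strongly_cesaro :: "(nat \<Rightarrow> 'a::metric_space set) \<Rightarrow> 'a set \<Rightarrow> bool" where
  "wijsman_strongly_cesaro As A \<longleftrightarrow>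
     (\<forall>x. (\<lambda>n. (1 / real n) * (\<Sum>k=1..n. \<bar>infdist x (As k) - infdist x A\<bar>)) \<longlonglongrightarrow> 0)"

definition wijsman_strongly_cesaro_mod ::
    "(real \<Rightarrow> real) \<Rightarrow> (nat \<Rightarrow> 'a::metric_space set) \<Rightarrow> 'a set \<Rightarrow> bool" where
  "wijsman_strongly_cesaro_mod f As A \<longleftrightarrow>
     (\<forall>x. (\<lambda>n. (1 / real n) * (\<Sum>k=1..n. f \<bar>infdist x (As k) - infdist x A\<bar>)) \<longlonglongrightarrow> 0)"

end

theory Submission
  imports Defs
begin

lemma mod_nat: assumes "modulus f" shows "f (real n) \<le> real n * f 1"
proof (induction n)
  case 0 then show ?case using assms unfolding modulus_def by auto
next
  case (Suc n)
  have "f (real n + 1) \<le> f (real n) + f 1" using assms unfolding modulus_def by auto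
  then show ?case using Suc by (simp add: algebra_simps)
qed

lemma mod_bound:
  assumes "modulus f" "e > 0"
  shows "\<exists>C\<ge>0. \<forall>t\<ge>0. f t \<le> e + C * t"
proof -
  have cont: "continuous_on {0..} f" and f0: "f 0 = 0" and nn: "\<And>x. x\<ge>0 \<Longrightarrow> f x \<ge> 0"
    and mono: "\<And>x y. 0 \<le> x \<Longrightarrow> x \<le> y \<Longrightarrow> f x \<le> f y"
    using assms(1) unfolding modulus_def by auto
  obtain d where d: "d > 0" "\<And>t. t \<in> {0..} \<Longrightarrow> dist t 0 < d \<Longrightarrow> dist (f t) (f 0) < e"
    using cont assms(2) unfolding continuous_on_iff by (meson atLeast_iff order_refl)
  define C where "C = f 1 * (1 + 1/d)"
  have f1: "f 1 \<ge> 0" using nn by simp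
  have C0: "C \<ge> 0" unfolding C_def using f1 d by simp
  have "f t \<le> e + C * t" if t: "t \<ge> 0" for t
  proof (cases "t < d")
    case True
    then have "dist (f t) (f 0) < e" using d t by (simp add: dist_real_def)
    then show ?thesis using f0 C0 t by (smt (verit) dist_real_def mult_nonneg_nonneg)
  next
    case False
    define n where "n = nat (ceiling t)"
    have n1: "t \<le> real n" "real n \<le> t + 1" unfolding n_def using t
      by (simp_all add: le_nat_iff ceiling_le_iff)
    have "f t \<le> f (real n)" using mono t n1 by auto
    also have "\<dots> \<le> real n * f 1" by (rule mod_nat[OF assms(1)])
    also have "\<dots> \<le> (t + 1) * f 1" using n1 f1 by (simp add: mult_right_mono)
    also have "\<dots> \<le> (t + t/d) * f 1"
    proof -
      have "1 \<le> t / d" using False d by simp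
      then show ?thesis using f1 by (simp add: mult_right_mono)
    qed
    also have "\<dots> = C * t" unfolding C_def using d by (simp add: field_simps)
    finally show ?thesis using assms(2) by simp
  qed
  then show ?thesis using C0 by blast
qed

theorem theorem4p3:
  fixes As :: "nat \<Rightarrow> 'a::metric_space set" and A :: "'a set" and f :: "real \<Rightarrow> real"
  assumes "\<forall>k. As k \<in> CL" and "A \<in> CL" and "modulus f"
    and "wijsman_strongly_cesaro As A"
  shows "wijsman_strongly_cesaro_mod f As A"
  unfolding wijsman_strongly_cesaro_mod_def
proof
  fix x
  define g where "g k = \<bar>infdist x (As k) - infdist x A\<bar>" for k
  define b where "b n = (1 / real n) * (\<Sum>k=1..n. g k)" for n
  define a where "a n = (1 / real n) * (\<Sum>k=1..n. f (g k))" for n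
  have b: "b \<longlonglongrightarrow> 0" using assms(4) unfolding wijsman_strongly_cesaro_def b_def g_def by blast
  have nn: "\<And>t. t\<ge>0 \<Longrightarrow> f t \<ge> 0" using assms(3) unfolding modulus_def by auto
  have "a \<longlonglongrightarrow> 0"
  proof (rule LIMSEQ_I)
    fix r :: real assume r: "r > 0"
    obtain C where C: "C \<ge> 0" "\<And>t. t\<ge>0 \<Longrightarrow> f t \<le> r/2 + C * t"
      using mod_bound[OF assms(3), of "r/2"] r by auto
    obtain N where N: "\<And>n. n \<ge> N \<Longrightarrow> norm (b n - 0) < r / (2 * (C+1))"
      using LIMSEQ_D[OF b, of "r / (2*(C+1))"] r C by auto
    show "\<exists>N. \<forall>n\<ge>N. norm (a n - 0) < r"
    proof (intro exI allI impI)
      fix n assume n: "n \<ge> Suc N"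
      have n0: "real n > 0" using n by simp
      have bn: "\<bar>b n\<bar> < r / (2 * (C+1))" using N[of n] n by simp
      have a0: "a n \<ge> 0" unfolding a_def using nn g_def by (auto intro!: sum_nonneg mult_nonneg_nonneg divide_nonneg_nonneg)
      have "(\<Sum>k=1..n. f (g k)) \<le> (\<Sum>k=1..n. r/2 + C * g k)"
        by (rule sum_mono) (use C g_def in auto)
      also have "\<dots> = real n * (r/2) + C * (\<Sum>k=1..n. g k)"
        by (simp add: sum.distrib sum_distrib_left)
      finally have an: "a n \<le> r/2 + C * b n"
        unfolding a_def b_def using n0 by (simp add: field_simps divide_right_mono)
      moreover have "(C+1) * (r / (2 * (C+1))) = r/2" using C by (simp add: field_simps)
      have "C * b n < r/2"
      proof -
        have "C * \<bar>b n\<bar> \<le> C * (r / (2 * (C+1)))" using bn C by (intro mult_left_mono) auto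
        also have "\<dots> < (C+1) * (r / (2 * (C+1)))" using r C by (intro mult_strict_right_mono) auto
        finally show ?thesis using \<open>(C+1) * (r / (2 * (C+1))) = r/2\<close>
          by (smt (verit) C(1) mult_left_mono abs_ge_self)
      qed
      then show "norm (a n - 0) < r" using a0 an by simp
    qed
  qed
  then show "(\<lambda>n. (1 / real n) * (\<Sum>k=1..n. f \<bar>infdist x (As k) - infdist x A\<bar>)) \<longlonglongrightarrow> 0"
    unfolding a_def g_def .
qed

end
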